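(* On $\mathbb{R}^4$ with coordinates $(x_0,x_1,x_2,x_3)$ consider the Poisson bivector $$\pi=x_1(\partial_0\wedge\partial_1+\partial_2\wedge\partial_3)+x_3(\partial_0\wedge\partial_3+\partial_1\wedge\partial_2),$$ and the Lichnerowicz–Poisson complex of multivector fields with formal power series coefficients in $\mathbb{R}[[x_0,x_1,x_2,x_3]]$, with differential $\mathrm{d}_\pi=[\pi,\cdot]_{\rm SN}$. Its cohomology is $H^0_{\rm formal}=\mathbb{R}\langle1\rangle$, $H^1_{\rm formal}=\mathbb{R}^2=\langle[\partial_0],[\partial_2]\rangle$, $H^2_{\rm formal}=\mathbb{R}=\langle[\partial_0\wedge\partial_2]\rangle$, $H^3_{\rm formal}=0$, $H^4_{\rm formal}=0$. Moreover $[\partial_0]$ is (up to the factor $2$) the modular class of $\pi$ with respect to $\mathrm{d}x_0\wedge\mathrm{d}x_1\wedge\mathrm{d}x_2\wedge\mathrm{d}x_3$, and $\partial_2$ is a non-vanishing vector field along the line bundle direction $L^1$ (the $x_2$-axis).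
   Context: $\partial_i=\partial/\partial x_i$, and $[\cdot,\cdot]_{\rm SN}$ is the Schouten–Nijenhuis bracket. This bivector is the local model of the Poisson structure induced by a near-symplectic form on a 4-manifold near its singular circle, with $x_0$ the circle direction, $x_2$ the fibre coordinate of the line subbundle $L^1$ and $(x_1,x_3)$ those of the plane subbundle of the normal bundle. For an oriented Poisson manifold with volume form $\Omega$, the modular vector field $Y^\Omega$ is defined by $\mathcal{L}_{X_f}\Omega=(Y^\Omega f)\Omega$ with $X_f=\pi^\sharp(\mathrm{d}f)$. *)

theory Defs
  imports Complex_Main "HOL-Library.Numeral_Type"
begin

text \<open>Coordinates x0,x1,x2,x3 are indexed by the 4-element type 4 (0 < 1 < 2 < 3).
A formal power series in R[[x0,x1,x2,x3]] is its coefficient function on exponent vectors.\<close>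

type_synonym fps4 = "(4 \<Rightarrow> nat) \<Rightarrow> real"

text \<open>A multivector field: coefficient of the increasingly ordered wedge d_I of the
coordinate vector fields d_i, i in I (so a k-vector field is supported on sets of card k).\<close>

type_synonym mv = "4 set \<Rightarrow> fps4"

definition fmul :: "fps4 \<Rightarrow> fps4 \<Rightarrow> fps4" where
  "fmul f g m = (\<Sum>k\<in>{k. \<forall>i. k i \<le> m i}. f k * g (\<lambda>i. m i - k i))"

definition fpd :: "4 \<Rightarrow> fps4 \<Rightarrow> fps4" where
  "fpd i f m = real (m i + 1) * f (m(i := m i + 1))"

definition fconst :: "real \<Rightarrow> fps4" where
  "fconst c m = (if m = (\<lambda>_. 0) then c else 0)"

definition fvar :: "4 \<Rightarrow> fps4" where
  "fvar i m = (if m = (\<lambda>j. if j = i then 1 else 0) then 1 else 0)"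

definition mvzero :: mv where "mvzero = (\<lambda>_ _. 0)"

definition mvadd :: "mv \<Rightarrow> mv \<Rightarrow> mv" where
  "mvadd A B = (\<lambda>I m. A I m + B I m)"

definition mvscale :: "real \<Rightarrow> mv \<Rightarrow> mv" where
  "mvscale c A = (\<lambda>I m. c * A I m)"

definition ebasis :: "4 set \<Rightarrow> mv" where
  "ebasis I = (\<lambda>J. if J = I then fconst 1 else (\<lambda>_. 0))"

definition fn0 :: "fps4 \<Rightarrow> mv" where
  "fn0 f = (\<lambda>J. if J = {} then f else (\<lambda>_. 0))"

definition is_kvec :: "nat \<Rightarrow> mv \<Rightarrow> bool" where
  "is_kvec k A \<longleftrightarrow> (\<forall>I. card I \<noteq> k \<longrightarrow> A I = (\<lambda>_. 0))"

definition wedge :: "mv \<Rightarrow> mv \<Rightarrow> mv" where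
  "wedge A B K m = (\<Sum>p\<in>{(I, J). I \<union> J = K \<and> I \<inter> J = {}}.
      (-1) ^ card {(i, j). i \<in> fst p \<and> j \<in> snd p \<and> j < i} * fmul (A (fst p)) (B (snd p)) m)"

text \<open>Partial derivative in x_i (coefficientwise), and left / right derivatives in the odd
variable xi_i (= d_i) of the supermanifold description of multivector fields.\<close>
definition dx :: "4 \<Rightarrow> mv \<Rightarrow> mv" where
  "dx i A = (\<lambda>I. fpd i (A I))"

definition ldxi :: "4 \<Rightarrow> mv \<Rightarrow> mv" where
  "ldxi i A = (\<lambda>I m. if i \<in> I then 0
                      else (-1) ^ card {j \<in> I. j < i} * A (insert i I) m)"

definition rdxi :: "4 \<Rightarrow> mv \<Rightarrow> mv" where
  "rdxi i A = (\<lambda>I m. if i \<in> I then 0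
                      else (-1) ^ card {j \<in> I. i < j} * A (insert i I) m)"

text \<open>Schouten--Nijenhuis bracket (odd Poisson bracket on T*[1]R^4):
  [P,Q] = sum_i (P <-d/dxi_i)(d_{x_i} Q) - (d_{x_i} P)(d/dxi_i-> Q).
  On vector fields it is the Lie bracket.\<close>
definition schouten :: "mv \<Rightarrow> mv \<Rightarrow> mv" where
  "schouten P Q = (\<lambda>I m. \<Sum>i\<in>UNIV.
      wedge (rdxi i P) (dx i Q) I m - wedge (dx i P) (ldxi i Q) I m)"

definition piNS :: mv where
  "piNS I = (if I = {0, 1} \<or> I = {2, 3} then fvar 1
             else if I = {0, 3} \<or> I = {1, 2} then fvar 3 else (\<lambda>_. 0))"

definition dpi :: "mv \<Rightarrow> mv" where
  "dpi A = schouten piNS A"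

text \<open>Components pi^{ij} of a bivector, Hamiltonian vector field X_f = pi#(df)
  (X_f^j = sum_i pi^{ij} d_i f), divergence w.r.t. dx0\<and>dx1\<and>dx2\<and>dx3
  (L_X Omega = (div X) Omega), and action of a vector field on a function.\<close>
definition bicomp :: "mv \<Rightarrow> 4 \<Rightarrow> 4 \<Rightarrow> fps4" where
  "bicomp P i j = (if i < j then P {i, j} else if j < i then (\<lambda>m. - P {i, j} m) else (\<lambda>_. 0))"

definition hamvf :: "mv \<Rightarrow> fps4 \<Rightarrow> mv" where
  "hamvf P f = (\<lambda>J m. if card J = 1
       then (\<Sum>i\<in>UNIV. fmul (bicomp P i (the_elem J)) (fpd i f) m) else 0)"

definition fdiv :: "mv \<Rightarrow> fps4" where
  "fdiv X = (\<lambda>m. \<Sum>i\<in>UNIV. fpd i (X {i}) m)"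

definition vapply :: "mv \<Rightarrow> fps4 \<Rightarrow> fps4" where
  "vapply X f = (\<lambda>m. \<Sum>i\<in>UNIV. fmul (X {i}) (fpd i f) m)"

end

theory Submission
  imports Defs "HOL-Library.Function_Algebras" "HOL-Library.FuncSet"
begin


lemma ord4: "(0::4) < 1" "(1::4) < 2" "(2::4) < 3" "(0::4) < 2" "(0::4) < 3" "(1::4) < 3"
  by (simp_all add: less_bit0_def bit0.Rep_0 bit0.Rep_1 bit0.Rep_numeral)

lemma nord4: "\<not> (1::4) < 0" "\<not> (2::4) < 0" "\<not> (3::4) < 0" "\<not> (2::4) < 1" "\<not> (3::4) < 1" "\<not> (3::4) < 2"
  "\<not> (0::4) < 0" "\<not> (1::4) < 1" "\<not> (2::4) < 2" "\<not> (3::4) < 3"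
  by (simp_all add: less_bit0_def bit0.Rep_0 bit0.Rep_1 bit0.Rep_numeral)

lemma all4: "(x::4) = 0 \<or> x = 1 \<or> x = 2 \<or> x = 3"
proof -
  have a: "Rep_bit0 x < 4" using bit0.Rep_less_n[of x] by simp
  have b: "0 \<le> Rep_bit0 x" using type_definition.Rep[OF type_definition_bit0, of x] by simp
  from a b have "Rep_bit0 x \<in> {0,1,2,3}" by auto
  thus ?thesis
    by (auto simp: bit0.Rep_inject_sym bit0.Rep_0 bit0.Rep_1 bit0.Rep_numeral)
qed

lemma UNIV4: "(UNIV::4 set) = {0,1,2,3}" using all4 by auto

definition xv :: "4 \<Rightarrow> mv \<Rightarrow> mv" where
  "xv i A = (\<lambda>I m. if m i = 0 then 0 else A I (m(i := m i - 1)))"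
definition cnt :: "4 set \<Rightarrow> 4 \<Rightarrow> nat" where "cnt I i = card {j\<in>I. j < i}"
definition sv :: "4 \<Rightarrow> mv \<Rightarrow> mv" where
  "sv i A = (\<lambda>I m. if i \<in> I then (-1) ^ cnt I i * A (I - {i}) m else 0)"
lemma ldxi_cnt: "ldxi i A = (\<lambda>I m. if i \<in> I then 0 else (-1) ^ cnt I i * A (insert i I) m)"
  unfolding ldxi_def cnt_def by (rule refl)

abbreviation "LL \<equiv> ldxi"
abbreviation "DD \<equiv> dx"

lemma card_lt_insert: "a \<notin> I \<Longrightarrow> card {j \<in> insert a (I::4 set). j < i} = card {j\<in>I. j < i} + (if a < i then 1 else 0)"
proof -
  assume a: "a \<notin> I"
  have f: "finite {j\<in>I. j < i}" by simp
  show ?thesis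
  proof (cases "a < i")
    case True
    hence "{j \<in> insert a I. j < i} = insert a {j\<in>I. j < i}" by auto
    thus ?thesis using a f True by simp
  next
    case False
    hence "{j \<in> insert a I. j < i} = {j\<in>I. j < i}" by auto
    thus ?thesis using False by simp
  qed
qed

lemma card_lt_remove: "a \<in> I \<Longrightarrow> card {j \<in> (I::4 set). j < i} = card {j\<in>I - {a}. j < i} + (if a < i then 1 else 0)"
  using card_lt_insert[of a "I - {a}" i] by (simp add: insert_absorb)

lemma cnt_insert: "a \<notin> I \<Longrightarrow> cnt (insert a I) i = cnt I i + (if a < i then 1 else 0)"
  unfolding cnt_def by (rule card_lt_insert)
lemma cnt_remove: "a \<in> I \<Longrightarrow> cnt I i = cnt (I - {a}) i + (if a < i then 1 else 0)"
  unfolding cnt_def by (rule card_lt_remove)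
lemma cnt_self: "cnt I i = cnt (I - {i}) i" unfolding cnt_def by (rule arg_cong[where f=card], auto)
lemma cnt_self2: "cnt (insert i I) i = cnt I i" unfolding cnt_def by (rule arg_cong[where f=card], auto)
lemma card_lt_self: "{j \<in> I. j < (i::4)} = {j \<in> I - {i}. j < i}" by auto

lemma xv_lin: "xv i (A + B) = xv i A + xv i B" "xv i (A - B) = xv i A - xv i B" "xv i (- A) = - xv i A" "xv i 0 = 0"
  by (auto simp: fun_eq_iff xv_def)
lemma sv_lin: "sv i (A + B) = sv i A + sv i B" "sv i (A - B) = sv i A - sv i B" "sv i (- A) = - sv i A" "sv i 0 = 0"
  by (auto simp: fun_eq_iff sv_def algebra_simps)
lemma dx_lin: "dx i (A + B) = dx i A + dx i B" "dx i (A - B) = dx i A - dx i B" "dx i (- A) = - dx i A" "dx i 0 = 0"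
  by (auto simp: fun_eq_iff dx_def fpd_def algebra_simps)
lemma ldxi_lin: "ldxi i (A + B) = ldxi i A + ldxi i B" "ldxi i (A - B) = ldxi i A - ldxi i B" "ldxi i (- A) = - ldxi i A" "ldxi i 0 = 0"
  by (auto simp: fun_eq_iff ldxi_def algebra_simps)

lemma xv_xv: "xv i (xv j A) = xv j (xv i A)"
  by (auto simp: fun_eq_iff xv_def fun_upd_twist)
lemma dx_dx: "dx i (dx j A) = dx j (dx i A)"
  by (auto simp: fun_eq_iff dx_def fpd_def fun_upd_twist)
lemma sv_xv: "sv i (xv j A) = xv j (sv i A)"
  by (auto simp: fun_eq_iff xv_def sv_def)
lemma dx_sv: "dx i (sv j A) = sv j (dx i A)"
  by (auto simp: fun_eq_iff dx_def fpd_def sv_def)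
lemma L_xv: "ldxi i (xv j A) = xv j (ldxi i A)"
  by (auto simp: fun_eq_iff xv_def ldxi_def)
lemma L_dx: "ldxi i (dx j A) = dx j (ldxi i A)"
  by (auto simp: fun_eq_iff dx_def fpd_def ldxi_def)
lemma dx_xv: "dx i (xv j A) = xv j (dx i A) + (if i = j then A else 0)"
proof (cases "i = j")
  case True
  show ?thesis using True
    by (auto simp: fun_eq_iff xv_def dx_def fpd_def of_nat_diff algebra_simps)
next
  case False
  show ?thesis using False
    by (auto simp: fun_eq_iff xv_def dx_def fpd_def fun_upd_twist)
qed


lemma sv_sv_same: "sv i (sv i A) = 0"
  by (auto simp: fun_eq_iff sv_def)
lemma L_L_same: "ldxi i (ldxi i A) = 0"
  by (auto simp: fun_eq_iff ldxi_def)

lemma neg1_pow_if: "(-1::real) ^ (n + (if b then 1 else 0)) = (if b then - ((-1) ^ n) else (-1)^n)"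
  by auto

lemma sv_sv: assumes "i \<noteq> j" shows "sv i (sv j A) = - sv j (sv i A)"
proof (rule ext, rule ext)
  fix I m
  show "sv i (sv j A) I m = (- sv j (sv i A)) I m"
  proof (cases "i \<in> I \<and> j \<in> I")
    case True
    have c1: "cnt I i = cnt (I-{j}) i + (if j<i then 1 else 0)"
      using cnt_remove True by blast
    have c2: "cnt I j = cnt (I-{i}) j + (if i<j then 1 else 0)"
      using cnt_remove True by blast
    have e: "I - {j} - {i} = I - {i} - {j}" by auto
    have L: "sv i (sv j A) I m = (-1)^cnt I i * ((-1)^cnt (I-{i}) j * A (I-{i}-{j}) m)"
      using True assms by (simp add: sv_def)
    have R: "sv j (sv i A) I m = (-1)^cnt I j * ((-1)^cnt (I-{j}) i * A (I-{i}-{j}) m)"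
      using True assms by (simp add: sv_def e)
    show ?thesis
    proof (cases "i < j")
      case True
      hence "\<not> j < i" by simp
      thus ?thesis using True by (simp add: L R c1 c2)
    next
      case False
      hence "j < i" using assms by (simp add: not_less_iff_gr_or_eq)
      thus ?thesis using False by (simp add: L R c1 c2)
    qed
  next
    case False
    thus ?thesis using assms by (auto simp: sv_def)
  qed
qed


lemma L_L: assumes "i \<noteq> j" shows "ldxi i (ldxi j A) = - ldxi j (ldxi i A)"
proof (rule ext, rule ext)
  fix I m
  show "ldxi i (ldxi j A) I m = (- ldxi j (ldxi i A)) I m"
  proof (cases "i \<notin> I \<and> j \<notin> I")
    case True
    have c1: "cnt (insert i I) j = cnt I j + (if i<j then 1 else 0)"
      using cnt_insert True by blast
    have c2: "cnt (insert j I) i = cnt I i + (if j<i then 1 else 0)"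
      using cnt_insert True by blast
    have e: "insert i (insert j I) = insert j (insert i I)" by auto
    have L: "ldxi i (ldxi j A) I m = (-1)^cnt I i * ((-1)^cnt (insert i I) j * A (insert j (insert i I)) m)"
      using True assms by (simp add: ldxi_cnt)
    have R: "ldxi j (ldxi i A) I m = (-1)^cnt I j * ((-1)^cnt (insert j I) i * A (insert j (insert i I)) m)"
      using True assms by (simp add: ldxi_cnt e)
    show ?thesis
    proof (cases "i < j")
      case True
      hence "\<not> j < i" by simp
      thus ?thesis using True by (simp add: L R c1 c2)
    next
      case False
      hence "j < i" using assms by (simp add: not_less_iff_gr_or_eq)
      thus ?thesis using False by (simp add: L R c1 c2)
    qed
  next
    case False
    thus ?thesis using assms by (auto simp: ldxi_cnt)
  qed
qed

lemma L_sv: "ldxi i (sv j A) = (if i = j then A else 0) - sv j (ldxi i A)"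
proof (rule ext, rule ext)
  fix I m
  show "ldxi i (sv j A) I m = ((if i = j then A else 0) - sv j (ldxi i A)) I m"
  proof (cases "i = j")
    case True
    show ?thesis
    proof (cases "i \<in> I")
      case True
      have e: "insert i (I - {i}) = I" using True by auto
      have c: "cnt (I-{i}) i = cnt I i" by (rule cnt_self[symmetric])
      have "sv i (ldxi i A) I m = A I m" using True by (simp add: ldxi_cnt sv_def e c insert_absorb flip: power_add)
      moreover have "ldxi i (sv i A) I m = 0" using True by (simp add: ldxi_cnt)
      ultimately show ?thesis using \<open>i = j\<close> by simp
    next
      case False
      have c: "cnt (insert i I) i = cnt I i" by (rule cnt_self2)
      have e: "insert i I - {i} = I" using False by auto
      have "ldxi i (sv i A) I m = A I m" using False by (simp add: ldxi_cnt sv_def e c flip: power_add)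
      moreover have "sv i (ldxi i A) I m = 0" using False by (simp add: sv_def)
      ultimately show ?thesis using \<open>i = j\<close> by simp
    qed
  next
    case False
    show ?thesis
    proof (cases "i \<notin> I \<and> j \<in> I")
      case True
      have c1: "cnt (insert i I) j = cnt I j + (if i<j then 1 else 0)"
        using cnt_insert True by blast
      have c2: "cnt I i = cnt (I-{j}) i + (if j<i then 1 else 0)"
        using cnt_remove True by blast
      have e: "insert i I - {j} = insert i (I - {j})" using False by auto
      have L: "ldxi i (sv j A) I m = (-1)^cnt I i * ((-1)^cnt (insert i I) j * A (insert i (I - {j})) m)"
        using True by (simp add: ldxi_cnt sv_def e)
      have R: "sv j (ldxi i A) I m = (-1)^cnt I j * ((-1)^cnt (I-{j}) i * A (insert i (I - {j})) m)"
        using True by (simp add: ldxi_cnt sv_def)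
      show ?thesis
      proof (cases "i < j")
        case True
        hence "\<not> j < i" by simp
        thus ?thesis using True \<open>i \<noteq> j\<close> by (simp add: L R c1 c2)
      next
        case False
        hence "j < i" using \<open>i \<noteq> j\<close> by (simp add: not_less_iff_gr_or_eq)
        thus ?thesis using False \<open>i \<noteq> j\<close> by (simp add: L R c1 c2)
      qed
    next
      case False
      thus ?thesis using \<open>i \<noteq> j\<close> by (auto simp: ldxi_cnt sv_def)
    qed
  qed
qed


lemma xv_xv_01: "xv 1 (xv 0 A) = xv 0 (xv 1 A)" by (rule xv_xv)
lemma dx_dx_01: "dx 1 (dx 0 A) = dx 0 (dx 1 A)" by (rule dx_dx)
lemma xv_xv_02: "xv 2 (xv 0 A) = xv 0 (xv 2 A)" by (rule xv_xv)
lemma dx_dx_02: "dx 2 (dx 0 A) = dx 0 (dx 2 A)" by (rule dx_dx)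
lemma xv_xv_03: "xv 3 (xv 0 A) = xv 0 (xv 3 A)" by (rule xv_xv)
lemma dx_dx_03: "dx 3 (dx 0 A) = dx 0 (dx 3 A)" by (rule dx_dx)
lemma xv_xv_12: "xv 2 (xv 1 A) = xv 1 (xv 2 A)" by (rule xv_xv)
lemma dx_dx_12: "dx 2 (dx 1 A) = dx 1 (dx 2 A)" by (rule dx_dx)
lemma xv_xv_13: "xv 3 (xv 1 A) = xv 1 (xv 3 A)" by (rule xv_xv)
lemma dx_dx_13: "dx 3 (dx 1 A) = dx 1 (dx 3 A)" by (rule dx_dx)
lemma xv_xv_23: "xv 3 (xv 2 A) = xv 2 (xv 3 A)" by (rule xv_xv)
lemma dx_dx_23: "dx 3 (dx 2 A) = dx 2 (dx 3 A)" by (rule dx_dx)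
lemma sv_sv_ord: "j < i \<Longrightarrow> sv i (sv j A) = - sv j (sv i A)" by (rule sv_sv) simp
lemma L_L_ord: "j < i \<Longrightarrow> ldxi i (ldxi j A) = - ldxi j (ldxi i A)" by (rule L_L) simp


lemma ops_num: "xv i (X * numeral n) = xv i X * numeral n" "sv i (X * numeral n) = sv i X * numeral n"
   "dx i (X * numeral n) = dx i X * numeral n" "ldxi i (X * numeral n) = ldxi i X * numeral n"
   "xv i (numeral n * X) = numeral n * xv i X" "sv i (numeral n * X) = numeral n * sv i X"
   "dx i (numeral n * X) = numeral n * dx i X" "ldxi i (numeral n * X) = numeral n * ldxi i X"
  by (auto simp: fun_eq_iff xv_def sv_def dx_def fpd_def ldxi_def algebra_simps)

lemmas opnorm = xv_lin sv_lin dx_lin ldxi_lin xv_xv_01 dx_dx_01 xv_xv_02 dx_dx_02 xv_xv_03 dx_dx_03 xv_xv_12 dx_dx_12 xv_xv_13 dx_dx_13 xv_xv_23 dx_dx_23 sv_sv_ord L_L_ord sv_sv_same L_L_same ops_num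
  sv_xv dx_xv dx_sv L_xv L_dx L_sv ord4

definition dd :: "mv \<Rightarrow> mv" where
  "dd A = - sv 1 (xv 1 (dx 0 A)) - sv 3 (xv 3 (dx 0 A)) + sv 0 (xv 1 (dx 1 A)) - sv 2 (xv 3 (dx 1 A))
     - sv 3 (xv 1 (dx 2 A)) + sv 1 (xv 3 (dx 2 A)) + sv 2 (xv 1 (dx 3 A)) + sv 0 (xv 3 (dx 3 A))
     - sv 0 (sv 1 (ldxi 1 A)) - sv 2 (sv 3 (ldxi 1 A)) - sv 0 (sv 3 (ldxi 3 A)) - sv 1 (sv 2 (ldxi 3 A))"

definition hh :: "mv \<Rightarrow> mv" where
  "hh A = ldxi 0 A + ldxi 0 A + sv 1 (ldxi 0 (ldxi 1 A)) + sv 1 (ldxi 2 (ldxi 3 A))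
     + sv 3 (ldxi 0 (ldxi 3 A)) + sv 3 (ldxi 1 (ldxi 2 A))
     - xv 0 (dx 0 (ldxi 0 A)) - xv 0 (dx 1 (ldxi 1 A)) - xv 0 (dx 2 (ldxi 2 A)) - xv 0 (dx 3 (ldxi 3 A))
     + xv 2 (dx 0 (ldxi 2 A)) - xv 2 (dx 1 (ldxi 3 A)) - xv 2 (dx 2 (ldxi 0 A)) + xv 2 (dx 3 (ldxi 1 A))"

definition deg2 :: "mv \<Rightarrow> mv" where
  "deg2 A = xv 0 (dx 0 A) + xv 1 (dx 1 A) + xv 2 (dx 2 A) + xv 3 (dx 3 A)
          + xv 0 (dx 0 A) + xv 1 (dx 1 A) + xv 2 (dx 2 A) + xv 3 (dx 3 A)"

lemma dd_dd: "dd (dd A) = 0"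
  unfolding dd_def by (simp add: opnorm)

lemma homotopy: "dd (hh A) + hh (dd A) = deg2 A"
  unfolding dd_def hh_def deg2_def by (simp add: opnorm)


lemma finS: "finite {k::4\<Rightarrow>nat. \<forall>j. k j \<le> m j}"
proof -
  have "{k::4\<Rightarrow>nat. \<forall>j. k j \<le> m j} = Pi\<^sub>E UNIV (\<lambda>j. {..m j})"
    by (auto simp: PiE_UNIV_domain Pi_def)
  moreover have "finite (Pi\<^sub>E (UNIV::4 set) (\<lambda>j. {..m j}))" by (rule finite_PiE) auto
  ultimately show ?thesis by simp
qed

lemma fmul_fvar: "fmul (fvar i) g m = (if m i = 0 then 0 else g (m(i := m i - 1)))"
proof -
  let ?S = "{k::4\<Rightarrow>nat. \<forall>j. k j \<le> m j}"
  let ?e = "\<lambda>j. if j = i then 1 else (0::nat)"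
  have "fmul (fvar i) g m = (\<Sum>k\<in>?S. if k = ?e then g (\<lambda>j. m j - k j) else 0)"
    unfolding fmul_def fvar_def by (rule sum.cong) auto
  also have "\<dots> = (if ?e \<in> ?S then g (\<lambda>j. m j - ?e j) else 0)"
    using finS[of m] by (simp add: sum.delta)
  also have "\<dots> = (if m i = 0 then 0 else g (m(i := m i - 1)))"
  proof -
    have "?e \<in> ?S \<longleftrightarrow> 1 \<le> m i"
      by simp
    hence "?e \<in> ?S \<longleftrightarrow> m i \<noteq> 0" by arith
    moreover have "(\<lambda>j. m j - ?e j) = m(i := m i - 1)" by (auto simp: fun_eq_iff)
    ultimately show ?thesis by simp
  qed
  finally show ?thesis .
qed

lemma fmul_fconst: "fmul (fconst c) g m = c * g m"
proof -
  let ?S = "{k::4\<Rightarrow>nat. \<forall>j. k j \<le> m j}"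
  let ?e = "\<lambda>j::4. (0::nat)"
  have "fmul (fconst c) g m = (\<Sum>k\<in>?S. if k = ?e then c * g (\<lambda>j. m j - k j) else 0)"
    unfolding fmul_def fconst_def by (rule sum.cong) auto
  also have "\<dots> = c * g m"
    using finS[of m] by (simp add: sum.delta)
  finally show ?thesis .
qed

lemma fmul_zero: "fmul (\<lambda>_. 0) g m = 0" by (simp add: fmul_def)

lemma fmul_add: "fmul (\<lambda>k. f k + h k) g m = fmul f g m + fmul h g m"
  by (simp add: fmul_def algebra_simps sum.distrib)
lemma fmul_uminus: "fmul (\<lambda>k. - f k) g m = - fmul f g m"
  by (simp add: fmul_def sum_negf)

definition sing :: "4 set \<Rightarrow> fps4 \<Rightarrow> mv" where "sing S g = (\<lambda>J. if J = S then g else (\<lambda>_. 0))"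
definition fm :: "fps4 \<Rightarrow> mv \<Rightarrow> mv" where "fm g B = (\<lambda>J m. fmul g (B J) m)"

lemma wedge_sing: "wedge (sing S g) B K m = (if S \<subseteq> K then (-1)^card{(i,j). i\<in>S \<and> j\<in>K-S \<and> j<i} * fmul g (B (K - S)) m else 0)"
proof -
  let ?T = "{(I,J). I \<union> J = K \<and> I \<inter> J = ({}::4 set)}"
  let ?f = "\<lambda>p. (-1::real) ^ card {(i, j). i \<in> fst p \<and> j \<in> snd p \<and> j < i} * fmul g (B (snd p)) m"
  have fin: "finite ?T" by (rule finite_subset[of _ UNIV]) auto
  have "wedge (sing S g) B K m = (\<Sum>p\<in>?T. if fst p = S then ?f p else 0)"
    unfolding wedge_def sing_def by (rule sum.cong) (auto simp: fmul_zero)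
  also have "\<dots> = sum ?f {p\<in>?T. fst p = S}"
    by (rule sum.inter_filter[OF fin, symmetric])
  also have "{p\<in>?T. fst p = S} = (if S \<subseteq> K then {(S, K - S)} else {})"
    by auto
  finally show ?thesis by simp
qed

lemma wedge_sing1: "wedge (sing {i} g) B = sv i (fm g B)"
proof (rule ext, rule ext)
  fix K m
  have "{(a,b). a\<in>{i} \<and> b\<in>K-{i} \<and> b<a} = (\<lambda>b. (i,b)) ` {b\<in>K. b<i}" by auto
  hence "card {(a,b). a\<in>{i} \<and> b\<in>K-{i} \<and> b<a} = cnt K i"
    by (simp add: card_image inj_on_def cnt_def)
  thus "wedge (sing {i} g) B K m = sv i (fm g B) K m"
    by (simp add: wedge_sing sv_def fm_def)
qed

lemma wedge_sing2: assumes "i < j" shows "wedge (sing {i,j} g) B = sv i (sv j (fm g B))"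
proof (rule ext, rule ext)
  fix K m
  let ?X = "{b\<in>K. b<i}" and ?Y = "{b\<in>K - {i}. b<j}"
  have "{(a,b). a\<in>{i,j} \<and> b\<in>K-{i,j} \<and> b<a} = (\<lambda>b. (i,b)) ` ?X \<union> (\<lambda>b. (j,b)) ` ?Y"
    using assms by auto
  moreover have "(\<lambda>b. (i,b)) ` ?X \<inter> (\<lambda>b. (j,b)) ` ?Y = {}" using assms by auto
  ultimately have c: "card {(a,b). a\<in>{i,j} \<and> b\<in>K-{i,j} \<and> b<a} = cnt K i + cnt (K - {i}) j"
    by (simp add: card_Un_disjoint card_image inj_on_def cnt_def)
  have e: "K - {i,j} = K - {i} - {j}" by auto
  have "wedge (sing {i,j} g) B K m = (if {i,j} \<subseteq> K then (-1)^(cnt K i + cnt (K - {i}) j) * fmul g (B (K - {i,j})) m else 0)"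
    using wedge_sing[of "{i,j}" g B K m] unfolding c .
  moreover have "j \<noteq> i" using assms by simp
  ultimately show "wedge (sing {i,j} g) B K m = sv i (sv j (fm g B)) K m"
    using assms by (simp add: sv_def fm_def e power_add)
qed

lemma fmul_add': "fmul (f + h) g m = fmul f g m + fmul h g m"
  by (simp add: fmul_def algebra_simps sum.distrib)
lemma wedge_add: "wedge (P + Q) B = wedge P B + wedge Q B"
  by (auto simp: fun_eq_iff wedge_def fmul_add' sum.distrib algebra_simps)
lemma wedge_zero: "wedge 0 B = 0"
  by (auto simp: fun_eq_iff wedge_def fmul_def)

lemma fm_fvar: "fm (fvar a) B = xv a B" by (simp add: fun_eq_iff fm_def fmul_fvar xv_def)
lemma fm_neg: "fm (\<lambda>k. - f k) B = - fm f B" by (simp add: fun_eq_iff fm_def fmul_uminus)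
lemma fm_one: "fm (fconst 1) B = B" by (simp add: fun_eq_iff fm_def fmul_fconst)

lemma neq4: "(0::4) \<noteq> 1" "(0::4) \<noteq> 2" "(0::4) \<noteq> 3" "(1::4) \<noteq> 2" "(1::4) \<noteq> 3" "(2::4) \<noteq> 3"
  "(1::4) \<noteq> 0" "(2::4) \<noteq> 0" "(3::4) \<noteq> 0" "(2::4) \<noteq> 1" "(3::4) \<noteq> 1" "(3::4) \<noteq> 2"
  by simp_all


lemma set4_eq: "((A::4 set) = B) \<longleftrightarrow> ((0\<in>A \<longleftrightarrow> 0\<in>B) \<and> (1\<in>A\<longleftrightarrow>1\<in>B) \<and> (2\<in>A\<longleftrightarrow>2\<in>B) \<and> (3\<in>A\<longleftrightarrow>3\<in>B))"
proof
  assume "(0\<in>A \<longleftrightarrow> 0\<in>B) \<and> (1\<in>A\<longleftrightarrow>1\<in>B) \<and> (2\<in>A\<longleftrightarrow>2\<in>B) \<and> (3\<in>A\<longleftrightarrow>3\<in>B)"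
  thus "A = B"
  proof (intro set_eqI)
    fix x show "x \<in> A \<longleftrightarrow> x \<in> B" using all4[of x] \<open>_ \<and> _\<close> by auto
  qed
qed simp

lemma card_filter_single: "card {j. j = a \<and> P j} = (if P a then 1 else 0)"
proof -
  have "{j. j = a \<and> P j} = (if P a then {a} else {})" by auto
  thus ?thesis by simp
qed
lemma card_filter_single': "card {j \<in> {a}. P j} = (if P a then 1 else 0)"
proof -
  have "{j \<in> {a}. P j} = (if P a then {a} else {})" by auto
  thus ?thesis by simp
qed

lemma fpd_fvar: "fpd i (fvar j) = (if i = j then fconst 1 else (\<lambda>_. 0))"
proof (rule ext)
  fix m
  show "fpd i (fvar j) m = (if i = j then fconst 1 else (\<lambda>_. 0)) m"
  proof (cases "i = j")
    case True
    have "(m(i := m i + 1) = (\<lambda>k. if k = j then 1 else 0)) \<longleftrightarrow> m = (\<lambda>_. 0)"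
    proof
      assume a: "m(i := m i + 1) = (\<lambda>k. if k = j then 1 else 0)"
      show "m = (\<lambda>_. 0)"
      proof
        fix k show "m k = 0" using fun_cong[OF a, of k] True by (cases "k = i") auto
      qed
    qed (auto simp: True fun_eq_iff)
    thus ?thesis using True by (auto simp: fpd_def fvar_def fconst_def)
  next
    case False
    have "m(i := m i + 1) \<noteq> (\<lambda>k. if k = j then 1 else 0)"
    proof
      assume a: "m(i := m i + 1) = (\<lambda>k. if k = j then 1 else 0)"
      show False using fun_cong[OF a, of i] False by simp
    qed
    thus ?thesis using False by (simp add: fpd_def fvar_def)
  qed
qed

lemma fpd_zero: "fpd i (\<lambda>_. 0) = (\<lambda>_. 0)" by (simp add: fun_eq_iff fpd_def)


lemma rdxi0: "rdxi 0 piNS = sing {1} (\<lambda>k. - fvar 1 k) + sing {3} (\<lambda>k. - fvar 3 k)"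
proof (rule ext, rule ext)
  fix S m
  show "rdxi 0 piNS S m = (sing {1} (\<lambda>k. - fvar 1 k) + sing {3} (\<lambda>k. - fvar 3 k)) S m"
  proof (cases "S = {1} \<or> S = {3}")
    case True thus ?thesis by (elim disjE) (simp_all add: rdxi_def piNS_def sing_def doubleton_eq_iff neq4 ord4 nord4 card_filter_single card_filter_single')
  next
    case False thus ?thesis by (auto simp: rdxi_def piNS_def sing_def set4_eq neq4)
  qed
qed

lemma rdxi1: "rdxi 1 piNS = sing {0} (fvar 1) + sing {2} (\<lambda>k. - fvar 3 k)"
proof (rule ext, rule ext)
  fix S m
  show "rdxi 1 piNS S m = (sing {0} (fvar 1) + sing {2} (\<lambda>k. - fvar 3 k)) S m"
  proof (cases "S = {0} \<or> S = {2}")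
    case True thus ?thesis by (elim disjE) (simp_all add: rdxi_def piNS_def sing_def doubleton_eq_iff neq4 ord4 nord4 card_filter_single card_filter_single')
  next
    case False thus ?thesis by (auto simp: rdxi_def piNS_def sing_def set4_eq neq4)
  qed
qed

lemma rdxi2: "rdxi 2 piNS = sing {1} (fvar 3) + sing {3} (\<lambda>k. - fvar 1 k)"
proof (rule ext, rule ext)
  fix S m
  show "rdxi 2 piNS S m = (sing {1} (fvar 3) + sing {3} (\<lambda>k. - fvar 1 k)) S m"
  proof (cases "S = {1} \<or> S = {3}")
    case True thus ?thesis by (elim disjE) (simp_all add: rdxi_def piNS_def sing_def doubleton_eq_iff neq4 ord4 nord4 card_filter_single card_filter_single')
  next
    case False thus ?thesis by (auto simp: rdxi_def piNS_def sing_def set4_eq neq4)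
  qed
qed

lemma rdxi3: "rdxi 3 piNS = sing {0} (fvar 3) + sing {2} (fvar 1)"
proof (rule ext, rule ext)
  fix S m
  show "rdxi 3 piNS S m = (sing {0} (fvar 3) + sing {2} (fvar 1)) S m"
  proof (cases "S = {0} \<or> S = {2}")
    case True thus ?thesis by (elim disjE) (simp_all add: rdxi_def piNS_def sing_def doubleton_eq_iff neq4 ord4 nord4 card_filter_single card_filter_single')
  next
    case False thus ?thesis by (auto simp: rdxi_def piNS_def sing_def set4_eq neq4)
  qed
qed


lemma piNS_cases: "piNS S = fvar 1 \<or> piNS S = fvar 3 \<or> piNS S = (\<lambda>_. 0)"
  by (simp add: piNS_def)

lemma dx0pi: "dx 0 piNS = 0"
proof (rule ext)
  fix S
  have "fpd 0 (piNS S) = (\<lambda>_. 0)" using piNS_cases[of S] by (auto simp: fpd_fvar fpd_zero neq4)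
  thus "dx 0 piNS S = 0 S" by (simp add: dx_def fun_eq_iff)
qed

lemma dx2pi: "dx 2 piNS = 0"
proof (rule ext)
  fix S
  have "fpd 2 (piNS S) = (\<lambda>_. 0)" using piNS_cases[of S] by (auto simp: fpd_fvar fpd_zero neq4)
  thus "dx 2 piNS S = 0 S" by (simp add: dx_def fun_eq_iff)
qed

lemma dx1pi: "dx 1 piNS = sing {0,1} (fconst 1) + sing {2,3} (fconst 1)"
proof (rule ext, rule ext)
  fix S :: "4 set" and m :: "4 \<Rightarrow> nat"
  consider (a) "S = {0,1}" | (b) "S = {2,3}" | (c) "S = {0,3} \<or> S = {1,2}"
    | (d) "\<not>(S = {0,1} \<or> S = {2,3} \<or> S = {0,3} \<or> S = {1,2})" by blast
  thus "dx 1 piNS S m = (sing {0,1} (fconst 1) + sing {2,3} (fconst 1)) S m"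
  proof cases
    case a thus ?thesis by (simp add: dx_def piNS_def sing_def fpd_fvar doubleton_eq_iff neq4)
  next
    case b thus ?thesis by (simp add: dx_def piNS_def sing_def fpd_fvar doubleton_eq_iff neq4)
  next
    case c thus ?thesis by (elim disjE) (simp_all add: dx_def piNS_def sing_def fpd_fvar doubleton_eq_iff neq4)
  next
    case d thus ?thesis by (simp add: dx_def piNS_def sing_def fpd_zero)
  qed
qed

lemma dx3pi: "dx 3 piNS = sing {0,3} (fconst 1) + sing {1,2} (fconst 1)"
proof (rule ext, rule ext)
  fix S :: "4 set" and m :: "4 \<Rightarrow> nat"
  consider (a) "S = {0,3}" | (b) "S = {1,2}" | (c) "S = {0,1} \<or> S = {2,3}"
    | (d) "\<not>(S = {0,1} \<or> S = {2,3} \<or> S = {0,3} \<or> S = {1,2})" by blast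
  thus "dx 3 piNS S m = (sing {0,3} (fconst 1) + sing {1,2} (fconst 1)) S m"
  proof cases
    case a thus ?thesis by (simp add: dx_def piNS_def sing_def fpd_fvar doubleton_eq_iff neq4)
  next
    case b thus ?thesis by (simp add: dx_def piNS_def sing_def fpd_fvar doubleton_eq_iff neq4)
  next
    case c thus ?thesis by (elim disjE) (simp_all add: dx_def piNS_def sing_def fpd_fvar doubleton_eq_iff neq4)
  next
    case d thus ?thesis by (simp add: dx_def piNS_def sing_def fpd_zero)
  qed
qed


lemma sum4: "(\<Sum>i\<in>(UNIV::4 set). f i) = f 0 + f 1 + f 2 + f 3"
proof -
  have "(\<Sum>i\<in>(UNIV::4 set). f i) = (\<Sum>i\<in>{0,1,2,3}. f i)" by (simp only: UNIV4)
  also have "\<dots> = f 0 + (f 1 + (f 2 + f 3))" by (simp add: neq4)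
  finally show ?thesis by (simp add: add.assoc)
qed

lemma dpi_dd: "dpi A = dd A"
proof (rule ext, rule ext)
  fix K m
  have "dpi A K m = (wedge (rdxi 0 piNS) (dx 0 A) K m - wedge (dx 0 piNS) (ldxi 0 A) K m)
     + (wedge (rdxi 1 piNS) (dx 1 A) K m - wedge (dx 1 piNS) (ldxi 1 A) K m)
     + (wedge (rdxi 2 piNS) (dx 2 A) K m - wedge (dx 2 piNS) (ldxi 2 A) K m)
     + (wedge (rdxi 3 piNS) (dx 3 A) K m - wedge (dx 3 piNS) (ldxi 3 A) K m)"
    by (simp only: dpi_def schouten_def sum4)
  also have "\<dots> = (- sv 1 (xv 1 (dx 0 A)) K m - sv 3 (xv 3 (dx 0 A)) K m - 0)
     + (sv 0 (xv 1 (dx 1 A)) K m - sv 2 (xv 3 (dx 1 A)) K m - (sv 0 (sv 1 (ldxi 1 A)) K m + sv 2 (sv 3 (ldxi 1 A)) K m))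
     + (sv 1 (xv 3 (dx 2 A)) K m - sv 3 (xv 1 (dx 2 A)) K m - 0)
     + (sv 0 (xv 3 (dx 3 A)) K m + sv 2 (xv 1 (dx 3 A)) K m - (sv 0 (sv 3 (ldxi 3 A)) K m + sv 1 (sv 2 (ldxi 3 A)) K m))"
    unfolding rdxi0 rdxi1 rdxi2 rdxi3 dx0pi dx1pi dx2pi dx3pi wedge_add wedge_zero plus_fun_apply
      wedge_sing1 wedge_sing2[OF ord4(1)] wedge_sing2[OF ord4(2)] wedge_sing2[OF ord4(3)] wedge_sing2[OF ord4(5)]
      fm_neg fm_fvar fm_one sv_lin uminus_apply zero_fun_apply
    by (simp only: diff_minus_eq_add)
  also have "\<dots> = dd A K m"
    unfolding dd_def plus_fun_apply minus_apply uminus_apply by (simp only: algebra_simps)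
  finally show "dpi A K m = dd A K m" .
qed


definition fx :: "4 \<Rightarrow> fps4 \<Rightarrow> fps4" where "fx a g = (\<lambda>m. if m a = 0 then 0 else g (m(a := m a - 1)))"

lemma fmul_fvar_fx: "fmul (fvar a) g = fx a g" by (simp add: fun_eq_iff fmul_fvar fx_def)
lemma fmul_scale: "fmul (\<lambda>k. c * f k) g m = c * fmul f g m" by (simp add: fmul_def sum_distrib_left algebra_simps)

lemma fx_lin: "fx a (g + h) = fx a g + fx a h" "fx a (g - h) = fx a g - fx a h" "fx a (- g) = - fx a g" "fx a 0 = 0"
  by (auto simp: fun_eq_iff fx_def)
lemma fpd_lin: "fpd i (g + h) = fpd i g + fpd i h" "fpd i (g - h) = fpd i g - fpd i h" "fpd i (- g) = - fpd i g" "fpd i 0 = 0"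
  by (auto simp: fun_eq_iff fpd_def algebra_simps)
lemma fpd_fx: "fpd i (fx a g) = fx a (fpd i g) + (if i = a then g else 0)"
proof (cases "i = a")
  case True
  show ?thesis using True
    by (auto simp: fun_eq_iff fx_def fpd_def of_nat_diff algebra_simps)
next
  case False
  show ?thesis using False
    by (auto simp: fun_eq_iff fx_def fpd_def fun_upd_twist)
qed
lemma fpd_fpd: "fpd i (fpd j g) = fpd j (fpd i g)"
  by (auto simp: fun_eq_iff fpd_def fun_upd_twist algebra_simps)
lemma fpd_fpd_01: "fpd 1 (fpd 0 g) = fpd 0 (fpd 1 g)" by (rule fpd_fpd)
lemma fpd_fpd_02: "fpd 2 (fpd 0 g) = fpd 0 (fpd 2 g)" by (rule fpd_fpd)
lemma fpd_fpd_03: "fpd 3 (fpd 0 g) = fpd 0 (fpd 3 g)" by (rule fpd_fpd)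
lemma fpd_fpd_12: "fpd 2 (fpd 1 g) = fpd 1 (fpd 2 g)" by (rule fpd_fpd)
lemma fpd_fpd_13: "fpd 3 (fpd 1 g) = fpd 1 (fpd 3 g)" by (rule fpd_fpd)
lemma fpd_fpd_23: "fpd 3 (fpd 2 g) = fpd 2 (fpd 3 g)" by (rule fpd_fpd)

lemma hamvf_single: "hamvf piNS f {i} = (\<lambda>m. \<Sum>j\<in>UNIV. fmul (bicomp piNS j i) (fpd j f) m)"
  by (simp add: hamvf_def fun_eq_iff)

lemma pi_ex: "piNS {0,1} = fvar 1" "piNS {2,3} = fvar 1" "piNS {0,3} = fvar 3" "piNS {1,2} = fvar 3"
  "piNS {0,2} = (\<lambda>_. 0)" "piNS {1,3} = (\<lambda>_. 0)"
  by (simp_all add: piNS_def doubleton_eq_iff neq4)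

lemma bc: "bicomp P i j = (if i < j then P {i,j} else if j < i then (\<lambda>m. - P {j,i} m) else (\<lambda>_. 0))"
  by (simp add: bicomp_def insert_commute)

lemma hv0: "hamvf piNS f {0} = - fx 1 (fpd 1 f) - fx 3 (fpd 3 f)"
  unfolding hamvf_single sum4 bc by (simp add: ord4 nord4 pi_ex fmul_zero fmul_uminus fmul_fvar_fx fun_eq_iff)
lemma hv1: "hamvf piNS f {1} = fx 1 (fpd 0 f) - fx 3 (fpd 2 f)"
  unfolding hamvf_single sum4 bc by (simp add: ord4 nord4 pi_ex fmul_zero fmul_uminus fmul_fvar_fx fun_eq_iff)
lemma hv2: "hamvf piNS f {2} = fx 3 (fpd 1 f) - fx 1 (fpd 3 f)"
  unfolding hamvf_single sum4 bc by (simp add: ord4 nord4 pi_ex fmul_zero fmul_uminus fmul_fvar_fx fun_eq_iff)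
lemma hv3: "hamvf piNS f {3} = fx 3 (fpd 0 f) + fx 1 (fpd 2 f)"
  unfolding hamvf_single sum4 bc by (simp add: ord4 nord4 pi_ex fmul_zero fmul_uminus fmul_fvar_fx fun_eq_iff)

lemma modular: "fdiv (hamvf piNS f) = vapply (mvscale 2 (ebasis {0})) f"
proof (rule ext)
  fix m
  have "fdiv (hamvf piNS f) m = (fpd 0 (hamvf piNS f {0}) + fpd 1 (hamvf piNS f {1})
     + fpd 2 (hamvf piNS f {2}) + fpd 3 (hamvf piNS f {3})) m"
    unfolding fdiv_def sum4 by simp
  also have "\<dots> = (fpd 0 f + fpd 0 f) m"
    unfolding hv0 hv1 hv2 hv3 by (simp add: fpd_lin fx_lin fpd_fx fpd_fpd_01 fpd_fpd_02 fpd_fpd_03 fpd_fpd_12 fpd_fpd_13 fpd_fpd_23 neq4)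
  also have "\<dots> = vapply (mvscale 2 (ebasis {0})) f m"
    unfolding vapply_def sum4 by (simp add: mvscale_def ebasis_def fmul_scale fmul_fconst fmul_zero neq4)
  finally show "fdiv (hamvf piNS f) m = vapply (mvscale 2 (ebasis {0})) f m" .
qed


definition degm :: "(4\<Rightarrow>nat) \<Rightarrow> nat" where "degm m = m 0 + m 1 + m 2 + m 3"
definition scl :: "(nat \<Rightarrow> real) \<Rightarrow> mv \<Rightarrow> mv" where "scl \<phi> A = (\<lambda>I m. \<phi> (degm m) * A I m)"

lemma degm_upd: "degm (m(i := v)) + m i = degm m + v"
  using all4[of i] by (auto simp: degm_def neq4)

lemma sv_scl: "sv i (scl \<phi> A) = scl \<phi> (sv i A)" by (auto simp: fun_eq_iff sv_def scl_def)
lemma L_scl: "ldxi i (scl \<phi> A) = scl \<phi> (ldxi i A)" by (auto simp: fun_eq_iff ldxi_def scl_def)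
lemma xd_scl: "xv i (dx j (scl \<phi> A)) = scl \<phi> (xv i (dx j A))"
proof (rule ext, rule ext)
  fix I m
  show "xv i (dx j (scl \<phi> A)) I m = scl \<phi> (xv i (dx j A)) I m"
  proof (cases "m i = 0")
    case True thus ?thesis by (simp add: xv_def scl_def)
  next
    case False
    let ?m' = "m(i := m i - 1)"
    have a: "degm ?m' + m i = degm m + (m i - 1)" by (rule degm_upd)
    have b: "degm (?m'(j := ?m' j + 1)) + ?m' j = degm ?m' + (?m' j + 1)" by (rule degm_upd)
    have c: "degm (?m'(j := ?m' j + 1)) = degm m" using a b False by arith
    show ?thesis using False c by (simp add: xv_def dx_def fpd_def scl_def)
  qed
qed

lemma scl_lin: "scl \<phi> (A + B) = scl \<phi> A + scl \<phi> B" "scl \<phi> (A - B) = scl \<phi> A - scl \<phi> B"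
  "scl \<phi> (- A) = - scl \<phi> A" "scl \<phi> 0 = 0"
  by (auto simp: fun_eq_iff scl_def algebra_simps)

lemma dd_scl: "dd (scl \<phi> A) = scl \<phi> (dd A)"
  unfolding dd_def by (simp add: sv_scl L_scl xd_scl scl_lin)

lemma dd_add: "dd (A + B) = dd A + dd B"
  unfolding dd_def by (simp add: opnorm algebra_simps)

lemma xvdx_self: "xv i (dx i A) I m = real (m i) * A I m"
  by (cases "m i = 0") (simp_all add: xv_def dx_def fpd_def of_nat_diff)

lemma deg2_pt: "deg2 A I m = 2 * real (degm m) * A I m"
  by (simp add: deg2_def xvdx_self degm_def algebra_simps)

lemma hh_zero: "hh 0 = 0" by (simp add: hh_def opnorm)

definition Zc :: "mv \<Rightarrow> mv" where "Zc Z = scl (\<lambda>n. if n = 0 then 1 else 0) Z"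
definition Zp :: "mv \<Rightarrow> mv" where "Zp Z = scl (\<lambda>n. 1 / (2 * real n)) Z"

lemma decomp: assumes "dd Z = 0" shows "Z = Zc Z + dd (hh (Zp Z))"
proof -
  have "dd (Zp Z) = 0" unfolding Zp_def dd_scl assms scl_lin ..
  hence e: "dd (hh (Zp Z)) = deg2 (Zp Z)" using homotopy[of "Zp Z"] hh_zero by simp
  show ?thesis
  proof (rule ext, rule ext)
    fix I m
    show "Z I m = (Zc Z + dd (hh (Zp Z))) I m"
      unfolding plus_fun_apply e deg2_pt by (cases "degm m = 0") (simp_all add: Zc_def Zp_def scl_def)
  qed
qed

lemma dd_Zc: "dd Z = 0 \<Longrightarrow> dd (Zc Z) = 0"
  unfolding Zc_def dd_scl by (simp add: scl_lin)

definition isconst :: "mv \<Rightarrow> bool" where "isconst A \<longleftrightarrow> (\<forall>I m. m \<noteq> (\<lambda>_. 0) \<longrightarrow> A I m = 0)"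

lemma degm0: "degm m = 0 \<longleftrightarrow> m = (\<lambda>_. 0)"
proof
  assume "degm m = 0"
  hence "m 0 = 0" "m 1 = 0" "m 2 = 0" "m 3 = 0" by (auto simp: degm_def)
  thus "m = (\<lambda>_. 0)" using all4 by (metis ext)
qed (simp add: degm_def)

lemma Zc_const: "isconst (Zc Z)" by (simp add: isconst_def Zc_def scl_def degm0)
lemma Zc_at0: "Zc Z I (\<lambda>_. 0) = Z I (\<lambda>_. 0)" by (simp add: Zc_def scl_def degm0)

lemma dx_const: "isconst A \<Longrightarrow> dx i A = 0"
proof (rule ext, rule ext)
  fix I and m :: "4 \<Rightarrow> nat" assume "isconst A"
  moreover have "m(i := m i + 1) \<noteq> (\<lambda>_. 0)"
  proof
    assume "m(i := m i + 1) = (\<lambda>_. 0)"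
    from fun_cong[OF this, of i] show False by simp
  qed
  ultimately show "dx i A I m = 0 I m" by (simp add: dx_def fpd_def isconst_def)
qed
lemma L_const: "isconst A \<Longrightarrow> isconst (ldxi i A)" by (simp add: isconst_def ldxi_def)
lemma sv_const: "isconst A \<Longrightarrow> isconst (sv i A)" by (simp add: isconst_def sv_def)
lemma scl_const: "isconst A \<Longrightarrow> isconst (scl \<phi> A)" by (simp add: isconst_def scl_def)

definition h0 :: "mv \<Rightarrow> mv" where
  "h0 A = ldxi 0 A + ldxi 0 A + ldxi 0 A + sv 1 (ldxi 0 (ldxi 1 A)) + sv 3 (ldxi 0 (ldxi 3 A))"
definition N13 :: "mv \<Rightarrow> mv" where
  "N13 A = sv 1 (ldxi 1 A) + sv 3 (ldxi 3 A) + sv 1 (sv 3 (ldxi 1 (ldxi 3 A)))"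

lemma h0_id: "dd (h0 A) + h0 (dd A) = - (N13 A + N13 A)
   + (xv 1 (dx 1 A) + xv 1 (dx 1 A) + xv 1 (dx 1 A)) - xv 1 (sv 1 (dx 0 (ldxi 0 A)))
   - xv 1 (sv 1 (dx 1 (ldxi 1 A))) - xv 1 (sv 3 (dx 1 (ldxi 3 A))) - xv 1 (sv 3 (dx 2 (ldxi 0 A)))
   + (xv 3 (dx 3 A) + xv 3 (dx 3 A) + xv 3 (dx 3 A)) + xv 3 (sv 1 (dx 2 (ldxi 0 A)))
   - xv 3 (sv 1 (dx 3 (ldxi 1 A))) - xv 3 (sv 3 (dx 0 (ldxi 0 A))) - xv 3 (sv 3 (dx 3 (ldxi 3 A)))"
  unfolding dd_def h0_def N13_def by (simp add: opnorm)

lemma h0_const: "isconst A \<Longrightarrow> dd (h0 A) + h0 (dd A) = - (N13 A + N13 A)"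
  unfolding h0_id by (simp add: dx_const L_const xv_lin sv_lin)

lemma svL_self: "sv i (ldxi i A) I m = (if i \<in> I then A I m else 0)"
  by (simp add: sv_def ldxi_cnt cnt_self[symmetric] insert_absorb flip: power_add)

lemma N13_pt: "N13 A I m = (if 1 \<in> I \<or> 3 \<in> I then A I m else 0)"
proof -
  have "sv 3 (ldxi 1 (ldxi 3 A)) = - ldxi 1 (sv 3 (ldxi 3 A))"
    using L_sv[of 1 3 "ldxi 3 A"] by (simp add: neq4)
  hence "sv 1 (sv 3 (ldxi 1 (ldxi 3 A))) I m = - (if 1 \<in> I then (if 3 \<in> I then A I m else 0) else 0)"
    by (simp add: sv_lin svL_self)
  thus ?thesis by (simp add: N13_def svL_self)
qed


definition Pc :: "mv \<Rightarrow> mv" where "Pc A = (\<lambda>I m. if 1 \<in> I \<or> 3 \<in> I then 0 else A I m)"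

lemma h0_zero: "h0 0 = 0" by (simp add: h0_def opnorm)

lemma cocycle_decomp: assumes "dd Z = 0"
  shows "Z = Pc (Zc Z) + dd (scl (\<lambda>_. -1/2) (h0 (Zc Z)) + hh (Zp Z))"
proof -
  have c: "dd (Zc Z) = 0" using dd_Zc[OF assms] .
  have "dd (h0 (Zc Z)) = - (N13 (Zc Z) + N13 (Zc Z))"
    using h0_const[OF Zc_const, of Z] c h0_zero by simp
  hence e: "dd (scl (\<lambda>_. -1/2) (h0 (Zc Z))) = N13 (Zc Z)"
    unfolding dd_scl by (auto simp: fun_eq_iff scl_def)
  have "Zc Z = Pc (Zc Z) + N13 (Zc Z)"
    by (auto simp: fun_eq_iff Pc_def N13_pt)
  hence "Z = Pc (Zc Z) + dd (scl (\<lambda>_. -1/2) (h0 (Zc Z))) + dd (hh (Zp Z))"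
    using decomp[OF assms] e by simp
  thus ?thesis by (simp add: dd_add add.assoc)
qed

lemma kv_zero: "is_kvec k 0" by (simp add: is_kvec_def fun_eq_iff)
lemma kv_add: "is_kvec k A \<Longrightarrow> is_kvec k B \<Longrightarrow> is_kvec k (A + B)" by (simp add: is_kvec_def fun_eq_iff)
lemma kv_diff: "is_kvec k A \<Longrightarrow> is_kvec k B \<Longrightarrow> is_kvec k (A - B)" by (simp add: is_kvec_def fun_eq_iff)
lemma kv_uminus: "is_kvec k A \<Longrightarrow> is_kvec k (- A)" by (simp add: is_kvec_def fun_eq_iff)
lemma kv_xv: "is_kvec k A \<Longrightarrow> is_kvec k (xv i A)" by (simp add: is_kvec_def xv_def fun_eq_iff)
lemma kv_dx: "is_kvec k A \<Longrightarrow> is_kvec k (dx i A)" by (simp add: is_kvec_def dx_def fpd_def fun_eq_iff)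
lemma kv_scl: "is_kvec k A \<Longrightarrow> is_kvec k (scl \<phi> A)" by (simp add: is_kvec_def scl_def fun_eq_iff)
lemma kv_Pc: "is_kvec k A \<Longrightarrow> is_kvec k (Pc A)" by (simp add: is_kvec_def Pc_def fun_eq_iff)
lemma kv_Zc: "is_kvec k A \<Longrightarrow> is_kvec k (Zc A)" unfolding Zc_def by (rule kv_scl)
lemma kv_Zp: "is_kvec k A \<Longrightarrow> is_kvec k (Zp A)" unfolding Zp_def by (rule kv_scl)
lemma kv_sv: "is_kvec k A \<Longrightarrow> is_kvec (Suc k) (sv i A)"
proof (unfold is_kvec_def, intro allI impI)
  fix I :: "4 set" assume a: "\<forall>I. card I \<noteq> k \<longrightarrow> A I = (\<lambda>_. 0)" and b: "card I \<noteq> Suc k"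
  show "sv i A I = (\<lambda>_. 0)"
  proof (cases "i \<in> I")
    case True
    hence "card (I - {i}) \<noteq> k" using b by (simp add: card_Diff_singleton) (metis Suc_pred card_gt_0_iff finite empty_iff)
    thus ?thesis using a True by (auto simp: sv_def fun_eq_iff)
  qed (simp add: sv_def fun_eq_iff)
qed
lemma kv_L: "is_kvec (Suc k) A \<Longrightarrow> is_kvec k (ldxi i A)"
proof (unfold is_kvec_def, intro allI impI)
  fix I :: "4 set" assume a: "\<forall>I. card I \<noteq> Suc k \<longrightarrow> A I = (\<lambda>_. 0)" and b: "card I \<noteq> k"
  show "ldxi i A I = (\<lambda>_. 0)"
  proof (cases "i \<in> I")
    case False
    hence "card (insert i I) \<noteq> Suc k" using b by simp
    thus ?thesis using a False by (auto simp: ldxi_def fun_eq_iff)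
  qed (simp add: ldxi_def fun_eq_iff)
qed
lemma kv_L0: "is_kvec 0 A \<Longrightarrow> ldxi i A = 0"
  by (auto simp: is_kvec_def ldxi_def fun_eq_iff)
lemma kv_sLL: "is_kvec (Suc k) A \<Longrightarrow> is_kvec k (sv i (ldxi j (ldxi l A)))"
proof (cases k)
  case 0
  assume "is_kvec (Suc k) A"
  hence "is_kvec 0 (ldxi l A)" using 0 kv_L by simp
  thus ?thesis by (simp add: kv_L0 sv_lin kv_zero)
next
  case (Suc k')
  assume "is_kvec (Suc k) A"
  thus ?thesis using Suc by (metis kv_L kv_sv)
qed
lemma kv_xdL: "is_kvec (Suc k) A \<Longrightarrow> is_kvec k (xv i (dx j (ldxi l A)))"
  by (intro kv_xv kv_dx kv_L)

lemma kv_hh: "is_kvec (Suc k) A \<Longrightarrow> is_kvec k (hh A)"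
  unfolding hh_def by (intro kv_add kv_diff kv_sLL kv_xdL kv_L; assumption)
lemma kv_h0: "is_kvec (Suc k) A \<Longrightarrow> is_kvec k (h0 A)"
  unfolding h0_def by (intro kv_add kv_sLL kv_L; assumption)

lemma kv_Y: "is_kvec (Suc k) Z \<Longrightarrow> is_kvec k (scl (\<lambda>_. -1/2) (h0 (Zc Z)) + hh (Zp Z))"
  by (intro kv_add kv_scl kv_h0 kv_hh kv_Zc kv_Zp)

lemma hh_kv0: "is_kvec 0 A \<Longrightarrow> hh A = 0"
  unfolding hh_def by (simp add: kv_L0 opnorm)

lemma dd_zero: "dd 0 = 0" by (simp add: dd_def opnorm)

lemma isconst_fn0: "isconst (fn0 (fconst c))" by (simp add: isconst_def fn0_def fconst_def)
lemma kv_fn0: "is_kvec 0 (fn0 f)" by (simp add: is_kvec_def fn0_def)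
lemma kv0_fn0: "is_kvec 0 Y \<Longrightarrow> Y = fn0 (Y {})"
  by (auto simp: is_kvec_def fn0_def fun_eq_iff)

lemma dd_kv0_const: "is_kvec 0 A \<Longrightarrow> isconst A \<Longrightarrow> dd A = 0"
  by (simp add: dd_def dx_const kv_L0 opnorm)

lemma dd_kv0_at0: "is_kvec 0 A \<Longrightarrow> dd A K (\<lambda>_. 0) = 0"
  apply (simp add: dd_def kv_L0 opnorm)
  by (simp add: xv_def)

lemma dd_at0_no13: "1 \<notin> K \<Longrightarrow> 3 \<notin> K \<Longrightarrow> dd A K (\<lambda>_. 0) = 0"
  by (simp add: dd_def xv_def sv_def)

lemma isconst_ebasis: "isconst (ebasis S)" by (simp add: isconst_def ebasis_def fconst_def)
lemma L_ebasis: "i \<notin> S \<Longrightarrow> ldxi i (ebasis S) = 0"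
  by (auto simp: fun_eq_iff ldxi_def ebasis_def)
lemma dd_ebasis: "1 \<notin> S \<Longrightarrow> 3 \<notin> S \<Longrightarrow> dd (ebasis S) = 0"
  by (simp add: dd_def dx_const[OF isconst_ebasis] L_ebasis opnorm)

lemma mvzero_eq: "mvzero = 0" by (simp add: mvzero_def fun_eq_iff)
lemma mvadd_eq: "mvadd A B = A + B" by (simp add: mvadd_def fun_eq_iff)


lemma card1_cases: "card (I::4 set) = 1 \<Longrightarrow> I = {0} \<or> I = {1} \<or> I = {2} \<or> I = {3}"
proof -
  assume "card I = 1"
  then obtain x where "I = {x}" by (auto simp: card_1_singleton_iff)
  thus ?thesis using all4[of x] by auto
qed
lemma sub02: "1 \<notin> I \<Longrightarrow> 3 \<notin> I \<Longrightarrow> I \<subseteq> {0,2::4}"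
proof
  fix x assume "1 \<notin> I" "3 \<notin> I" "x \<in> I"
  thus "x \<in> {0,2}" using all4[of x] by auto
qed
lemma card02: "card {0,2::4} = 2" by (simp add: neq4)
lemma card_sub02: "1 \<notin> I \<Longrightarrow> 3 \<notin> (I::4 set) \<Longrightarrow> card I \<le> 2"
proof -
  assume a: "1 \<notin> I" "3 \<notin> I"
  have "card I \<le> card {0,2::4}" by (rule card_mono) (simp, rule sub02[OF a])
  thus ?thesis using card02 by simp
qed
lemma card2_02: "1 \<notin> I \<Longrightarrow> 3 \<notin> (I::4 set) \<Longrightarrow> card I = 2 \<Longrightarrow> I = {0,2}"
proof -
  assume a: "1 \<notin> I" "3 \<notin> I" "card I = 2"
  show ?thesis by (rule card_subset_eq) (simp, rule sub02[OF a(1,2)], simp add: a(3) card02)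
qed

lemma PZ_pt: "Pc (Zc Z) I m = (if 1 \<in> I \<or> 3 \<in> I then 0 else if m = (\<lambda>_. 0) then Z I (\<lambda>_. 0) else 0)"
  by (simp add: Pc_def Zc_def scl_def degm0)

lemma H1: assumes kv1: "is_kvec 1 X" and dX: "dd X = 0"
  shows "\<exists>a b f. X = mvadd (mvadd (mvscale a (ebasis {0})) (mvscale b (ebasis {2}))) (dpi (fn0 f))"
proof -
  let ?Y = "scl (\<lambda>_. -1/2) (h0 (Zc X)) + hh (Zp X)"
  define a where "a = X {0} (\<lambda>_. 0)"
  define b where "b = X {2} (\<lambda>_. 0)"
  have kvY: "is_kvec 0 ?Y" using kv_Y[of 0 X] kv1 by simp
  have P: "Pc (Zc X) = mvadd (mvscale a (ebasis {0})) (mvscale b (ebasis {2}))"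
  proof (rule ext, rule ext)
    fix I :: "4 set" and m :: "4 \<Rightarrow> nat"
    show "Pc (Zc X) I m = mvadd (mvscale a (ebasis {0})) (mvscale b (ebasis {2})) I m"
    proof (cases "card I = 1")
      case True
      then consider "I = {0}" | "I = {1}" | "I = {2}" | "I = {3}" using card1_cases by blast
      thus ?thesis by cases (simp_all add: PZ_pt mvadd_def mvscale_def ebasis_def fconst_def neq4 a_def b_def)
    next
      case False
      hence "X I = (\<lambda>_. 0)" using kv1 by (simp add: is_kvec_def)
      moreover have "I \<noteq> {0}" "I \<noteq> {2}" using False by auto
      ultimately show ?thesis by (simp add: PZ_pt mvadd_def mvscale_def ebasis_def)
    qed
  qed
  have "X = Pc (Zc X) + dd ?Y" by (rule cocycle_decomp[OF dX])
  also have "?Y = fn0 (?Y {})" using kv0_fn0[OF kvY] .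
  finally have "X = mvadd (mvadd (mvscale a (ebasis {0})) (mvscale b (ebasis {2}))) (dpi (fn0 (?Y {})))"
    unfolding P dpi_dd mvadd_eq .
  thus ?thesis by blast
qed

lemma H2: assumes kv2: "is_kvec 2 Z" and dZ: "dd Z = 0"
  shows "\<exists>a Y. is_kvec 1 Y \<and> Z = mvadd (mvscale a (ebasis {0, 2})) (dpi Y)"
proof -
  let ?Y = "scl (\<lambda>_. -1/2) (h0 (Zc Z)) + hh (Zp Z)"
  define a where "a = Z {0,2} (\<lambda>_. 0)"
  have kvY: "is_kvec 1 ?Y" using kv_Y[of 1 Z] kv2 by (simp add: numeral_2_eq_2)
  have P: "Pc (Zc Z) = mvscale a (ebasis {0,2})"
  proof (rule ext, rule ext)
    fix I :: "4 set" and m :: "4 \<Rightarrow> nat"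
    show "Pc (Zc Z) I m = mvscale a (ebasis {0,2}) I m"
    proof (cases "card I = 2")
      case True
      show ?thesis
      proof (cases "1 \<in> I \<or> 3 \<in> I")
        case True
        have "I \<noteq> {0,2}"
        proof
          assume "I = {0,2}" with True show False by (simp add: neq4)
        qed
        thus ?thesis using True by (simp add: PZ_pt mvscale_def ebasis_def)
      next
        case False
        hence "I = {0,2}" using card2_02 \<open>card I = 2\<close> by blast
        thus ?thesis by (simp add: PZ_pt mvscale_def ebasis_def fconst_def neq4 a_def)
      qed
    next
      case False
      hence "Z I = (\<lambda>_. 0)" using kv2 by (simp add: is_kvec_def)
      moreover have "I \<noteq> {0,2}" using False card02 by auto
      ultimately show ?thesis by (simp add: PZ_pt mvscale_def ebasis_def)
    qed
  qed
  have "Z = Pc (Zc Z) + dd ?Y" by (rule cocycle_decomp[OF dZ])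
  hence "Z = mvadd (mvscale a (ebasis {0, 2})) (dpi ?Y)" unfolding P dpi_dd mvadd_eq .
  thus ?thesis using kvY by blast
qed

lemma Hhigh: assumes kv: "is_kvec (Suc k) Z" and k: "k \<ge> 2" and dZ: "dd Z = 0"
  shows "\<exists>W. is_kvec k W \<and> Z = dpi W"
proof -
  let ?Y = "scl (\<lambda>_. -1/2) (h0 (Zc Z)) + hh (Zp Z)"
  have kvY: "is_kvec k ?Y" using kv_Y[of k Z] kv by simp
  have P: "Pc (Zc Z) = 0"
  proof (rule ext, rule ext)
    fix I :: "4 set" and m :: "4 \<Rightarrow> nat"
    show "Pc (Zc Z) I m = 0 I m"
    proof (cases "card I = Suc k")
      case True
      have "1 \<in> I \<or> 3 \<in> I"
      proof (rule ccontr)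
        assume "\<not> (1 \<in> I \<or> 3 \<in> I)"
        hence "card I \<le> 2" using card_sub02 by blast
        with True k show False by simp
      qed
      thus ?thesis by (simp add: PZ_pt)
    next
      case False
      hence "Z I = (\<lambda>_. 0)" using kv by (simp add: is_kvec_def)
      thus ?thesis by (simp add: PZ_pt)
    qed
  qed
  have "Z = Pc (Zc Z) + dd ?Y" by (rule cocycle_decomp[OF dZ])
  hence "Z = dpi ?Y" unfolding P dpi_dd by simp
  thus ?thesis using kvY by blast
qed

lemma H0: "dpi (fn0 f) = mvzero \<longleftrightarrow> (\<exists>c. f = fconst c)"
proof
  assume "dpi (fn0 f) = mvzero"
  hence d: "dd (fn0 f) = 0" by (simp add: dpi_dd mvzero_eq)
  have "hh (Zp (fn0 f)) = 0" by (rule hh_kv0[OF kv_Zp[OF kv_fn0]])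
  hence e: "fn0 f = Zc (fn0 f)" using decomp[OF d] dd_zero by simp
  have "f = fconst (f (\<lambda>_. 0))"
  proof
    fix m
    have h: "f m = (if degm m = 0 then 1 else 0) * f m"
      using fun_cong[OF fun_cong[OF e, of "{}"], of m] by (simp add: fn0_def Zc_def scl_def)
    show "f m = fconst (f (\<lambda>_. 0)) m"
    proof (cases "m = (\<lambda>_. 0)")
      case True thus ?thesis by (simp add: fconst_def)
    next
      case False thus ?thesis using h by (simp add: fconst_def degm0)
    qed
  qed
  thus "\<exists>c. f = fconst c" by blast
next
  assume "\<exists>c. f = fconst c"
  then obtain c where "f = fconst c" by blast
  thus "dpi (fn0 f) = mvzero"
    by (simp add: dpi_dd mvzero_eq dd_kv0_const kv_fn0 isconst_fn0)
qed


theorem proposition4p3: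
  shows
    \<comment> \<open>H^0 = R<1>\<close>
    "(\<forall>f. dpi (fn0 f) = mvzero \<longleftrightarrow> (\<exists>c. f = fconst c))
   \<comment> \<open>H^1 = <[d0],[d2]>\<close>
   \<and> dpi (ebasis {0}) = mvzero \<and> dpi (ebasis {2}) = mvzero
   \<and> (\<forall>X. is_kvec 1 X \<and> dpi X = mvzero \<longrightarrow>
        (\<exists>a b f. X = mvadd (mvadd (mvscale a (ebasis {0})) (mvscale b (ebasis {2}))) (dpi (fn0 f))))
   \<and> (\<forall>a b f. mvadd (mvscale a (ebasis {0})) (mvscale b (ebasis {2})) = dpi (fn0 f)
        \<longrightarrow> a = 0 \<and> b = 0)
   \<comment> \<open>H^2 = <[d0 wedge d2]>\<close>
   \<and> dpi (ebasis {0, 2}) = mvzero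
   \<and> (\<forall>Z. is_kvec 2 Z \<and> dpi Z = mvzero \<longrightarrow>
        (\<exists>a Y. is_kvec 1 Y \<and> Z = mvadd (mvscale a (ebasis {0, 2})) (dpi Y)))
   \<and> (\<forall>a Y. is_kvec 1 Y \<and> mvscale a (ebasis {0, 2}) = dpi Y \<longrightarrow> a = 0)
   \<comment> \<open>H^3 = 0\<close>
   \<and> (\<forall>Z. is_kvec 3 Z \<and> dpi Z = mvzero \<longrightarrow> (\<exists>W. is_kvec 2 W \<and> Z = dpi W))
   \<comment> \<open>H^4 = 0\<close>
   \<and> (\<forall>Z. is_kvec 4 Z \<and> dpi Z = mvzero \<longrightarrow> (\<exists>W. is_kvec 3 W \<and> Z = dpi W))
   \<comment> \<open>modular vector field w.r.t. dx0 dx1 dx2 dx3 is 2 d0\<close>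
   \<and> (\<forall>f. fdiv (hamvf piNS f) = vapply (mvscale 2 (ebasis {0})) f)"
  proof -
  have c5: "\<forall>a b f. mvadd (mvscale a (ebasis {0})) (mvscale b (ebasis {2})) = dpi (fn0 f) \<longrightarrow> a = 0 \<and> b = 0"
  proof (intro allI impI)
    fix a b f assume e: "mvadd (mvscale a (ebasis {0})) (mvscale b (ebasis {2})) = dpi (fn0 f)"
    have "a = dpi (fn0 f) {0} (\<lambda>_. 0)" using fun_cong[OF fun_cong[OF e, of "{0}"], of "\<lambda>_. 0"]
      by (simp add: mvadd_def mvscale_def ebasis_def fconst_def neq4)
    moreover have "b = dpi (fn0 f) {2} (\<lambda>_. 0)" using fun_cong[OF fun_cong[OF e, of "{2}"], of "\<lambda>_. 0"]
      by (simp add: mvadd_def mvscale_def ebasis_def fconst_def neq4)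
    ultimately show "a = 0 \<and> b = 0" by (simp add: dpi_dd dd_kv0_at0 kv_fn0)
  qed
  have c8: "\<forall>a Y. is_kvec 1 Y \<and> mvscale a (ebasis {0, 2}) = dpi Y \<longrightarrow> a = 0"
  proof (intro allI impI)
    fix a Y assume e: "is_kvec 1 Y \<and> mvscale a (ebasis {0, 2}) = dpi Y"
    have "a = dpi Y {0,2} (\<lambda>_. 0)" using fun_cong[OF fun_cong[OF conjunct2[OF e], of "{0,2}"], of "\<lambda>_. 0"]
      by (simp add: mvscale_def ebasis_def fconst_def)
    thus "a = 0" by (simp add: dpi_dd dd_at0_no13 neq4)
  qed
  have c9: "\<forall>Z. is_kvec 3 Z \<and> dpi Z = mvzero \<longrightarrow> (\<exists>W. is_kvec 2 W \<and> Z = dpi W)"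
  proof (intro allI impI)
    fix Z assume e: "is_kvec 3 Z \<and> dpi Z = mvzero"
    have "is_kvec (Suc 2) Z" using e by (simp add: numeral_3_eq_3)
    thus "\<exists>W. is_kvec 2 W \<and> Z = dpi W" using Hhigh[of 2 Z] e by (simp add: dpi_dd mvzero_eq)
  qed
  have c10: "\<forall>Z. is_kvec 4 Z \<and> dpi Z = mvzero \<longrightarrow> (\<exists>W. is_kvec 3 W \<and> Z = dpi W)"
  proof (intro allI impI)
    fix Z assume e: "is_kvec 4 Z \<and> dpi Z = mvzero"
    have s: "(4::nat) = Suc 3" by simp
    have "is_kvec (Suc 3) Z" using e by (simp only: s)
    thus "\<exists>W. is_kvec 3 W \<and> Z = dpi W" using Hhigh[of 3 Z] e by (simp add: dpi_dd mvzero_eq)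
  qed
  show ?thesis
    using H0 H1 H2 c5 c8 c9 c10 modular
    by (simp add: dpi_dd mvzero_eq dd_ebasis neq4)
qed

end
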